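(* Consider a hierarchical clustering of a sensor network with levels $1,2,\dots,T$. For each level $i$, let $C_i$ be the (finite, nonempty) collection of clusters at level $i$, and for $l \in C_i$ let $N_i^{(l)}$ be the number of nodes in cluster $l$ at level $i$. Assume that every cluster size satisfies $N_i^{(l)} > 3$, and that cluster sizes strictly increase with level: for all levels $j < i$, all $l \in C_j$ and all $p \in C_i$, $N_j^{(l)} < N_i^{(p)}$. Let $K_T > 0$ be the sparsity of the whole data field, and for each level $i$ define the threshold $$K_{i\_T} = \max_{l \in C_i} \frac{N_i^{(l)}}{\log_2 N_i^{(l)}}.$$ In the HDACS scheme, the cluster head of cluster $l$ at level $i$ would transmit $M_i^{(l)} = K_T \log_2 N_i^{(l)}$ compressive-sensing measurements, and it is called CS-disabled if $M_i^{(l)} > N_i^{(l)}$ (in which case it transmits its $N_i^{(l)}$ raw data values instead). If $K_T > K_{i\_T}$ for some level $i$, then every cluster at every level $j \le i$ is CS-disabled, i.e. $K_T \log_2 N_j^{(l)} > N_j^{(l)}$ for all $j \le i$ and all $l \in C_j$.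
   Context: Logarithms are base 2. The sparsity $K_T$ denotes the number of significant (nonzero) coefficients of the entire data field in the transform domain; in HDACS this single global value is used at every cluster to determine the number of measurements $M = K_T \log_2 N$, where $N$ is the local cluster size. *)

theory Defs
  imports Complex_Main
begin

definition threshold :: "(nat \<Rightarrow> 'c set) \<Rightarrow> (nat \<Rightarrow> 'c \<Rightarrow> nat) \<Rightarrow> nat \<Rightarrow> real" where
  "threshold C N i = Max ((\<lambda>l. real (N i l) / log 2 (real (N i l))) ` C i)"

definition measurements :: "real \<Rightarrow> (nat \<Rightarrow> 'c \<Rightarrow> nat) \<Rightarrow> nat \<Rightarrow> 'c \<Rightarrow> real" where
  "measurements KT N i l = KT * log 2 (real (N i l))"

definition cs_disabled :: "real \<Rightarrow> (nat \<Rightarrow> 'c \<Rightarrow> nat) \<Rightarrow> nat \<Rightarrow> 'c \<Rightarrow> bool" where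
  "cs_disabled KT N i l \<longleftrightarrow> measurements KT N i l > real (N i l)"

end

theory Submission
  imports Defs
begin

lemma mono_log:
  fixes a b :: real assumes "3 \<le> a" "a \<le> b"
  shows "a / log 2 a \<le> b / log 2 b"
proof -
  have e: "exp 1 \<le> a" using exp_le assms by linarith
  have h: "ln b / b \<le> ln a / a" by (rule ln_x_over_x_mono[OF e assms(2)])
  have la: "ln a > 0" "a > 0" using assms by auto
  have lb: "ln b > 0" "b > 0" using assms by auto
  have "a / ln a \<le> b / ln b"
  proof -
    have "inverse (ln a / a) \<le> inverse (ln b / b)"
      using h la lb by (intro le_imp_inverse_le) auto
    thus ?thesis by simp
  qed
  hence "ln 2 * (a / ln a) \<le> ln 2 * (b / ln b)" by (intro mult_left_mono) auto
  moreover have "a / log 2 a = ln 2 * (a / ln a)" "b / log 2 b = ln 2 * (b / ln b)"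
    by (simp_all add: log_def)
  ultimately show ?thesis by simp
qed

theorem proposition1:
  fixes T :: nat and C :: "nat \<Rightarrow> 'c set" and N :: "nat \<Rightarrow> 'c \<Rightarrow> nat"
    and KT :: real and i :: nat
  assumes fin: "\<And>i. i \<in> {1..T} \<Longrightarrow> finite (C i)"
    and ne: "\<And>i. i \<in> {1..T} \<Longrightarrow> C i \<noteq> {}"
    and big: "\<And>i l. i \<in> {1..T} \<Longrightarrow> l \<in> C i \<Longrightarrow> N i l > 3"
    and incr: "\<And>i j l p. i \<in> {1..T} \<Longrightarrow> j \<in> {1..T} \<Longrightarrow> j < i \<Longrightarrow> l \<in> C j \<Longrightarrow> p \<in> C i
                 \<Longrightarrow> N j l < N i p"
    and KT_pos: "KT > 0"
    and i: "i \<in> {1..T}"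
    and exceed: "KT > threshold C N i"
  shows "\<forall>j \<in> {1..i}. \<forall>l \<in> C j. cs_disabled KT N j l"
proof (intro ballI)
  fix j l assume j: "j \<in> {1..i}" and l: "l \<in> C j"
  have jT: "j \<in> {1..T}" using j i by auto
  obtain p where p: "p \<in> C i" using ne[OF i] by blast
  define q where "q = (if j = i then l else p)"
  have q: "q \<in> C i" "N j l \<le> N i q" using p l incr[OF i jT _ l p] j by (auto simp: q_def less_imp_le)
  have big3: "real (N j l) \<ge> 3" using big[OF jT l] by simp
  have "real (N j l) / log 2 (real (N j l)) \<le> real (N i q) / log 2 (real (N i q))"
    using mono_log[OF big3] q(2) by simp
  also have "\<dots> \<le> threshold C N i"
    unfolding threshold_def using fin[OF i] q(1) by (intro Max_ge) auto
  finally have lt: "real (N j l) / log 2 (real (N j l)) < KT" using exceed by linarith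
  have lpos: "log 2 (real (N j l)) > 0" using big3 by simp
  have "real (N j l) < KT * log 2 (real (N j l))"
    using lt lpos by (simp add: divide_less_eq)
  thus "cs_disabled KT N j l" by (simp add: cs_disabled_def measurements_def)
qed

end
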